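(* Let $a_n=n$ for all $n\ge1$. Then for every integer $n\ge1$ that is not of the form $p^k$ with $p$ prime and $k\ge1$, one has $A_n^+=A_n^-$; in particular $A_n^+\equiv A_n^-\pmod n$.
   Context: $\mu$ is the Möbius function. For an integer sequence $(a_n)$ and $n\ge1$, $A_n^+=\prod_{d\mid n,\ \mu(d)=1} a_{n/d}$ and $A_n^-=\prod_{d\mid n,\ \mu(d)=-1} a_{n/d}$ (empty products equal $1$). *)

theory Defs
  imports "HOL-Computational_Algebra.Computational_Algebra"
begin

text \<open>Moebius function: 0 if n is not squarefree, otherwise (-1)^(number of distinct prime factors).
  mu 0 is set to 0 (irrelevant: only divisors of n >= 1 are used).\<close>
definition mu :: "nat \<Rightarrow> int" where
  "mu n = (if n = 0 \<or> \<not> squarefree n then 0 else (-1) ^ card (prime_factors n))"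

definition A_plus :: "(nat \<Rightarrow> int) \<Rightarrow> nat \<Rightarrow> int" where
  "A_plus a n = (\<Prod>d \<in> {d. d dvd n \<and> mu d = 1}. a (n div d))"

definition A_minus :: "(nat \<Rightarrow> int) \<Rightarrow> nat \<Rightarrow> int" where
  "A_minus a n = (\<Prod>d \<in> {d. d dvd n \<and> mu d = -1}. a (n div d))"

end

theory Submission
  imports Defs
begin

lemma mu_mult_prime:
  fixes p e :: nat
  assumes "prime p" "\<not> p dvd e" "e > 0" "squarefree e"
  shows "squarefree (p * e) \<and> mu (p * e) = - mu e"
proof -
  have cop: "coprime p e" using assms by (simp add: prime_imp_coprime)
  have sq: "squarefree (p * e)"
    using squarefree_mult_coprime[OF cop squarefree_prime[OF assms(1)] assms(4)] .
  have pf: "prime_factors (p * e) = insert p (prime_factors e)"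
    using assms by (simp add: prime_factorization_mult prime_factorization_prime)
  have "p \<notin> prime_factors e" using assms by (auto simp: prime_factors_dvd)
  then have "card (prime_factors (p * e)) = Suc (card (prime_factors e))"
    by (simp add: pf)
  then show ?thesis using sq assms unfolding mu_def by auto
qed

definition tog :: "nat \<Rightarrow> nat \<Rightarrow> nat" where
  "tog p d = (if p dvd d then d div p else d * p)"

lemma tog_props:
  fixes p n d :: nat
  assumes "prime p" "p dvd n" "n > 0" "d dvd n" "squarefree d"
  shows "tog p d dvd n \<and> squarefree (tog p d) \<and> mu (tog p d) = - mu d \<and> tog p (tog p d) = d"
proof (cases "p dvd d")
  case True
  then obtain e where e: "d = p * e" by auto
  have "e > 0" using dvd_pos_nat[OF assms(3) assms(4)] e by simp
  have sqe: "squarefree e" using e assms squarefree_multD by blast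
  have "\<not> p dvd e"
  proof
    assume "p dvd e"
    then have "p * p dvd d" using e by auto
    then show False using assms(5) assms(1) unfolding squarefree_def
      by (metis not_prime_unit power2_eq_square)
  qed
  have pe: "p > 0" using assms prime_gt_0_nat by blast
  have t: "tog p d = e" using True e pe by (simp add: tog_def)
  have t2: "tog p e = d" using \<open>\<not> p dvd e\<close> e by (simp add: tog_def)
  have mm: "mu d = - mu e" using mu_mult_prime[OF assms(1) \<open>\<not> p dvd e\<close> \<open>e>0\<close> sqe] e by simp
  have ed: "e dvd n" using e assms(4) dvd_mult_right by blast
  show ?thesis using mm ed t t2 sqe by simp
next
  case False
  have "d > 0" using dvd_pos_nat[OF assms(3) assms(4)] .
  have pe: "p > 0" using assms prime_gt_0_nat by blast
  have cop: "coprime p d" using assms False by (simp add: prime_imp_coprime)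
  have dv: "p * d dvd n" using divides_mult[OF assms(2) assms(4) cop] .
  have t: "tog p d = p * d" using False by (simp add: tog_def mult.commute)
  have t2: "tog p (p * d) = d" using pe by (simp add: tog_def)
  have M: "squarefree (p * d)" "mu (p * d) = - mu d"
    using mu_mult_prime[OF assms(1) False \<open>d>0\<close> assms(5)] by blast+
  show ?thesis unfolding t using M t2 dv by simp
qed

lemma mu_pm:
  assumes "mu d = 1 \<or> mu d = -1"
  shows "squarefree d" "d > 0"
  using assms unfolding mu_def by (auto split: if_splits)

lemma tog_dvd:
  assumes "prime p" "prime q" "p \<noteq> q" "d > 0"
  shows "p dvd tog q d \<longleftrightarrow> p dvd d"
proof (cases "q dvd d")
  case True
  then obtain e where "d = q * e" by auto
  moreover have "\<not> p dvd q" using assms primes_dvd_imp_eq by blast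
  ultimately show ?thesis using assms True
    by (simp add: tog_def prime_dvd_mult_iff)
next
  case False
  moreover have "\<not> p dvd q" using assms primes_dvd_imp_eq by blast
  ultimately show ?thesis using assms
    by (simp add: tog_def prime_dvd_mult_iff)
qed

lemma tog_dvd_self:
  assumes "prime p" "d > 0" "squarefree d"
  shows "p dvd tog p d \<longleftrightarrow> \<not> p dvd d"
proof (cases "p dvd d")
  case True
  then obtain e where e: "d = p * e" by auto
  have "\<not> p dvd e"
  proof
    assume "p dvd e"
    then have "p * p dvd d" using e by auto
    then show False using assms unfolding squarefree_def by (metis not_prime_unit power2_eq_square)
  qed
  then show ?thesis using True e assms by (simp add: tog_def)
qed (simp add: tog_def)


lemma two_primes:
  fixes n :: nat
  assumes "n > 1" "\<not> (\<exists>p k. prime p \<and> k \<ge> 1 \<and> n = p ^ k)"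
  obtains p q where "prime p" "prime q" "p \<noteq> q" "p dvd n" "q dvd n"
proof -
  have "n \<noteq> 1" using assms(1) by simp
  then obtain p where p: "prime p" "p dvd n" using prime_factor_nat[of n] by blast
  obtain m where m: "n = p ^ multiplicity p n * m" "\<not> p dvd m" by (rule multiplicity_decompose'[of n p]) (use assms(1) p(1) in auto)
  have k: "multiplicity p n \<ge> 1" using p assms(1)
    by (simp add: prime_multiplicity_gt_zero_iff Suc_le_eq)
  have "m \<noteq> 1"
  proof
    assume "m = 1"
    then have "n = p ^ multiplicity p n" using m by simp
    then show False using assms(2) k p(1) by blast
  qed
  then obtain q where q: "prime q" "q dvd m" using prime_factor_nat[of m] by blast
  have "m dvd n" using m(1) dvd_triv_right by metis
  then have "q dvd n" using q(2) dvd_trans by blast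
  moreover have "p \<noteq> q" using q(2) m(2) by blast
  ultimately show ?thesis using that p q by blast
qed

theorem lemma2:
  fixes a :: "nat \<Rightarrow> int" and n :: nat
  assumes "\<And>m. m \<ge> 1 \<Longrightarrow> a m = int m"
    and "n \<ge> 1"
    and "\<not> (\<exists>p k. prime p \<and> k \<ge> 1 \<and> n = p ^ k)"
  shows "A_plus a n = A_minus a n \<and> A_plus a n mod int n = A_minus a n mod int n"
proof -
  define Dp where "Dp = {d. d dvd n \<and> mu d = 1}"
  define Dm where "Dm = {d. d dvd n \<and> mu d = -1}"
  have npos: "n > 0" using assms by simp
  have fdiv: "finite {d. d dvd n}" using npos by simp
  have s1: "Dp \<subseteq> {d. d dvd n}" unfolding Dp_def by blast
  have s2: "Dm \<subseteq> {d. d dvd n}" unfolding Dm_def by blast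
  have fin: "finite Dp" "finite Dm" using finite_subset[OF s1 fdiv] finite_subset[OF s2 fdiv] by auto
  have aeq: "a (n div d) = int (n div d)" if "d dvd n" for d
  proof -
    have "n div d \<noteq> 0" using that npos dvd_div_eq_0_iff by blast
    then show ?thesis using assms(1) by simp
  qed
  have Ap: "A_plus a n = (\<Prod>d\<in>Dp. int (n div d))"
    unfolding A_plus_def Dp_def by (rule prod.cong) (auto simp: aeq)
  have Am: "A_minus a n = (\<Prod>d\<in>Dm. int (n div d))"
    unfolding A_minus_def Dm_def by (rule prod.cong) (auto simp: aeq)
  have main: "A_plus a n = A_minus a n"
  proof (cases "n = 1")
    case True
    have m1: "mu 1 = 1" by (simp add: mu_def)
    have "Dp = {1}" unfolding Dp_def using True m1 by (auto simp: set_eq_iff)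
    moreover have "Dm = {}" unfolding Dm_def using True m1 by (simp add: set_eq_iff)
    ultimately show ?thesis using Ap Am True by simp
  next
    case False
    then have "n > 1" using npos by simp
    then obtain p q where pq: "prime p" "prime q" "p \<noteq> q" "p dvd n" "q dvd n"
      using two_primes assms(3) by blast
    have Dpi: "squarefree d" "d > 0" "d dvd n" if "d \<in> Dp" for d
      using that mu_pm[of d] unfolding Dp_def by simp_all
    have Dmi: "squarefree d" "d > 0" "d dvd n" if "d \<in> Dm" for d
      using that mu_pm[of d] unfolding Dm_def by simp_all
    have tp1: "tog p d \<in> Dm \<and> tog p (tog p d) = d" if "d \<in> Dp" for d
    proof -
      have T: "tog p d dvd n" "mu (tog p d) = - mu d" "tog p (tog p d) = d"
        using tog_props[OF pq(1) pq(4) npos Dpi(3)[OF that] Dpi(1)[OF that]] by blast+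
      have "mu d = 1" using that unfolding Dp_def by blast
      then have "mu (tog p d) = - 1" using T(2) by simp
      then have "tog p d \<in> Dm" using T(1) unfolding Dm_def by blast
      then show ?thesis using T(3) by blast
    qed
    have tp2: "tog p d \<in> Dp \<and> tog p (tog p d) = d" if "d \<in> Dm" for d
    proof -
      have T: "tog p d dvd n" "mu (tog p d) = - mu d" "tog p (tog p d) = d"
        using tog_props[OF pq(1) pq(4) npos Dmi(3)[OF that] Dmi(1)[OF that]] by blast+
      have "mu d = - 1" using that unfolding Dm_def by blast
      then have "mu (tog p d) = 1" using T(2) by simp
      then have "tog p d \<in> Dp" using T(1) unfolding Dp_def by blast
      then show ?thesis using T(3) by blast
    qed
    have tq1: "tog q d \<in> Dm \<and> tog q (tog q d) = d" if "d \<in> Dp" for d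
    proof -
      have T: "tog q d dvd n" "mu (tog q d) = - mu d" "tog q (tog q d) = d"
        using tog_props[OF pq(2) pq(5) npos Dpi(3)[OF that] Dpi(1)[OF that]] by blast+
      have "mu d = 1" using that unfolding Dp_def by blast
      then have "mu (tog q d) = - 1" using T(2) by simp
      then have "tog q d \<in> Dm" using T(1) unfolding Dm_def by blast
      then show ?thesis using T(3) by blast
    qed
    have bij: "bij_betw (tog p) Dp Dm"
    proof (rule bij_betw_byWitness[where f'="tog p"])
      show "\<forall>x\<in>Dp. tog p (tog p x) = x" using tp1 by blast
      show "\<forall>y\<in>Dm. tog p (tog p y) = y" using tp2 by blast
      show "tog p ` Dp \<subseteq> Dm" using tp1 by blast
      show "tog p ` Dm \<subseteq> Dp" using tp2 by blast
    qed
    have Am2: "A_minus a n = (\<Prod>d\<in>Dp. int (n div tog p d))"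
      using Am prod.reindex_bij_betw[OF bij, of "\<lambda>d. int (n div d)"] by simp
    have pw: "int (n div tog p d) * (if p dvd d then 1 else int p)
              = int (n div d) * (if p dvd d then int p else 1)" if dD: "d \<in> Dp" for d
    proof (cases "p dvd d")
      case True
      then obtain e where e: "d = p * e" by auto
      obtain k where k: "n = d * k" using Dpi(3)[OF dD] by auto
      have "e > 0" using Dpi(2)[OF dD] e by auto
      have pp: "p > 0" using pq prime_gt_0_nat by blast
      have "tog p d = e" using True e pp by (simp add: tog_def)
      moreover have "n div e = p * k" using k e \<open>e>0\<close> by simp
      moreover have "n div d = k" using k Dpi(2)[OF dD] by simp
      ultimately show ?thesis using True by simp
    next
      case False
      have "tog p d = d * p" using False by (simp add: tog_def)
      moreover have "d * p dvd n" using tp1[OF dD] \<open>tog p d = d * p\<close> unfolding Dm_def by auto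
      then obtain k where k: "n = d * p * k" by auto
      have pp: "p > 0" using pq prime_gt_0_nat by blast
      have "n div (d * p) = k" using k Dpi(2)[OF dD] pp by simp
      moreover have "n div d = p * k" using k Dpi(2)[OF dD] by simp
      ultimately show ?thesis using False by simp
    qed
    define S1 where "S1 = Dp \<inter> {d. p dvd d}"
    define S0 where "S0 = Dp \<inter> - {d. p dvd d}"
    have finS: "finite S1" "finite S0" unfolding S1_def S0_def using fin(1) by blast+
    define psi where "psi = (\<lambda>d. tog p (tog q d))"
    have psiD: "psi d \<in> Dp" if "d \<in> Dp" for d
      using tq1[OF that] tp2 unfolding psi_def by blast
    have psidvd: "p dvd psi d \<longleftrightarrow> \<not> p dvd d" if "d \<in> Dp" for d
    proof -
      have m: "tog q d \<in> Dm" using tq1[OF that] by blast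
      have "p dvd psi d \<longleftrightarrow> \<not> p dvd tog q d"
        unfolding psi_def by (rule tog_dvd_self[OF pq(1) Dmi(2)[OF m] Dmi(1)[OF m]])
      also have "\<dots> \<longleftrightarrow> \<not> p dvd d" using tog_dvd[OF pq(1) pq(2) pq(3) Dpi(2)[OF that]] by simp
      finally show ?thesis .
    qed
    have inj: "inj_on psi Dp"
    proof (rule inj_onI)
      fix x y assume xy: "x \<in> Dp" "y \<in> Dp" "psi x = psi y"
      have m: "tog q x \<in> Dm" "tog q y \<in> Dm" using tq1 xy(1,2) by blast+
      have "tog q x = tog p (tog p (tog q x))" using tp2[OF m(1)] by simp
      also have "\<dots> = tog p (tog p (tog q y))" using xy(3) unfolding psi_def by simp
      also have "\<dots> = tog q y" using tp2[OF m(2)] by simp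
      finally have "tog q (tog q x) = tog q (tog q y)" by simp
      then show "x = y" using tq1[OF xy(1)] tq1[OF xy(2)] by simp
    qed
    have i1: "inj_on psi S1" using inj_on_subset[OF inj] unfolding S1_def by blast
    have i0: "inj_on psi S0" using inj_on_subset[OF inj] unfolding S0_def by blast
    have im1: "psi ` S1 \<subseteq> S0" unfolding S1_def S0_def using psiD psidvd by blast
    have im0: "psi ` S0 \<subseteq> S1" unfolding S1_def S0_def using psiD psidvd by blast
    have "card S1 \<le> card S0" by (rule card_inj_on_le[OF i1 im1 finS(2)])
    moreover have "card S0 \<le> card S1" by (rule card_inj_on_le[OF i0 im0 finS(1)])
    ultimately have cardeq: "card S1 = card S0" by simp
    have eqc: "A_minus a n * int p ^ card S0 = A_plus a n * int p ^ card S1"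
    proof -
      have "A_minus a n * int p ^ card S0 = (\<Prod>d\<in>Dp. int (n div tog p d) * (if p dvd d then 1 else int p))"
        unfolding Am2 prod.distrib prod.If_cases[OF fin(1)] by (simp add: S0_def)
      also have "\<dots> = (\<Prod>d\<in>Dp. int (n div d) * (if p dvd d then int p else 1))"
        by (rule prod.cong) (use pw in auto)
      also have "\<dots> = A_plus a n * int p ^ card S1"
        unfolding Ap prod.distrib prod.If_cases[OF fin(1)] by (simp add: S1_def)
      finally show ?thesis .
    qed
    have nz: "int p ^ card S1 \<noteq> 0" using pq(1) prime_gt_0_nat by auto
    have "A_minus a n * int p ^ card S1 = A_plus a n * int p ^ card S1" using eqc cardeq by simp
    then have "A_minus a n = A_plus a n" using mult_right_cancel[OF nz] by blast
    then show ?thesis by simp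
  qed
  then show ?thesis by simp
qed

end
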